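(* Fix $k\in\mathbb N$ and $a_1,\dots,a_k<0$, let $A_N=\operatorname{diag}(a_1,\dots,a_k,0,\dots,0)\in\mathbb R^{N\times N}$, let $\mathbf y_1,\dots,\mathbf y_N$ be i.i.d. $\mathcal N(0,\mathrm{Id}_N)$ vectors, and let $\gamma_k=\frac12\big(\frac{2}{k\Gamma(k/2)}\big)^{2/k}$. Then $$\frac{\gamma_kN^{2/k}}{\big(\prod_{j=1}^k|a_j|\big)^{1/k}}\max_{i=1}^N\langle\mathbf y_i,A_N\mathbf y_i\rangle\to\Psi_{k/2}\quad\text{in distribution as }N\to\infty,$$ where $\Psi_{k/2}$ has distribution function $\min(\exp(-(-x)^{k/2}),1)$. *)

theory Defs
  imports "HOL-Probability.Probability"
begin

text \<open>The N x N matrix A_N = diag(a_1,...,a_k,0,...,0), indices 0-based (entries i,j < N).\<close>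
definition diagA :: "nat \<Rightarrow> (nat \<Rightarrow> real) \<Rightarrow> nat \<Rightarrow> nat \<Rightarrow> real" where
  "diagA k a i j = (if i = j \<and> i < k then a i else 0)"

definition quadform :: "nat \<Rightarrow> (nat \<Rightarrow> nat \<Rightarrow> real) \<Rightarrow> (nat \<Rightarrow> real) \<Rightarrow> real" where
  "quadform N A y = (\<Sum>i<N. y i * (\<Sum>j<N. A i j * y j))"

definition gamma_k :: "nat \<Rightarrow> real" where
  "gamma_k k = 1/2 * (2 / (real k * Gamma (real k / 2))) powr (2 / real k)"

definition Psi_cdf :: "real \<Rightarrow> real \<Rightarrow> real" where
  "Psi_cdf \<alpha> x = (if x < 0 then exp (- ((- x) powr \<alpha>)) else 1)"

end

theory Submission
  imports Defs
begin


lemma PiM_density_prod: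
  fixes \<phi> :: "'j \<Rightarrow> real \<Rightarrow> real"
  assumes J: "finite J"
    and sf: "\<And>j. sigma_finite_measure (density lborel (\<lambda>x. ennreal (\<phi> j x)))"
    and meas: "\<And>j. \<phi> j \<in> borel_measurable borel"
  shows "PiM J (\<lambda>j. density lborel (\<lambda>x. ennreal (\<phi> j x))) =
         density (PiM J (\<lambda>_. lborel)) (\<lambda>x. \<Prod>j\<in>J. ennreal (\<phi> j (x j)))"
proof -
  interpret P: product_sigma_finite "\<lambda>j. density lborel (\<lambda>x. ennreal (\<phi> j x))"
    unfolding product_sigma_finite_def using sf by auto
  interpret L: product_sigma_finite "\<lambda>_. lborel"
    by (simp add: product_sigma_finite_def lborel.sigma_finite_measure_axioms)
  note meas[measurable]
  have mP: "(\<lambda>x. \<Prod>j\<in>J. ennreal (\<phi> j (x j))) \<in> borel_measurable (PiM J (\<lambda>_. lborel))"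
    by measurable
  show ?thesis
  proof (rule P.PiM_eqI[symmetric, OF J])
    show "sets (density (Pi\<^sub>M J (\<lambda>_. lborel)) (\<lambda>x. \<Prod>j\<in>J. ennreal (\<phi> j (x j)))) =
        sets (Pi\<^sub>M J (\<lambda>j. density lborel (\<lambda>x. ennreal (\<phi> j x))))"
      unfolding sets_density by (rule sets_PiM_cong) auto
  next
    fix A assume A: "\<And>i. i \<in> J \<Longrightarrow> A i \<in> sets (density lborel (\<lambda>x. ennreal (\<phi> i x)))"
    have PA: "Pi\<^sub>E J A \<in> sets (PiM J (\<lambda>_. lborel))"
      using A by (auto intro!: sets_PiM_I_finite J)
    have "emeasure (density (Pi\<^sub>M J (\<lambda>_. lborel)) (\<lambda>x. \<Prod>j\<in>J. ennreal (\<phi> j (x j)))) (Pi\<^sub>E J A)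
       = (\<integral>\<^sup>+ x. (\<Prod>j\<in>J. ennreal (\<phi> j (x j))) * indicator (Pi\<^sub>E J A) x \<partial>PiM J (\<lambda>_. lborel))"
      using PA mP by (subst emeasure_density) (auto simp: mult.commute)
    also have "\<dots> = (\<integral>\<^sup>+ x. (\<Prod>j\<in>J. ennreal (\<phi> j (x j)) * indicator (A j) (x j)) \<partial>PiM J (\<lambda>_. lborel))"
    proof (rule nn_integral_cong)
      fix x :: "'j \<Rightarrow> real" assume "x \<in> space (PiM J (\<lambda>_. lborel))"
      then have "x \<in> extensional J" by (simp add: space_PiM PiE_def)
      then show "(\<Prod>j\<in>J. ennreal (\<phi> j (x j))) * indicator (Pi\<^sub>E J A) x =
             (\<Prod>j\<in>J. ennreal (\<phi> j (x j)) * indicator (A j) (x j))"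
        using J by (auto simp add: prod.distrib indicator_def PiE_def Pi_def prod_zero_iff)
    qed
    also have "\<dots> = (\<Prod>j\<in>J. \<integral>\<^sup>+ y. ennreal (\<phi> j y) * indicator (A j) y \<partial>lborel)"
      using A meas by (intro L.product_nn_integral_prod J) auto
    also have "\<dots> = (\<Prod>j\<in>J. emeasure (density lborel (\<lambda>x. ennreal (\<phi> j x))) (A j))"
      using A by (intro prod.cong refl, subst emeasure_density) auto
    finally show "emeasure (density (Pi\<^sub>M J (\<lambda>_. lborel)) (\<lambda>x. \<Prod>j\<in>J. ennreal (\<phi> j (x j)))) (Pi\<^sub>E J A)
       = (\<Prod>j\<in>J. emeasure (density lborel (\<lambda>x. ennreal (\<phi> j x))) (A j))" .
  qed
qed


lemma normal_density_0_mono: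
  assumes "\<sigma> > 0" "z\<^sup>2 \<le> w\<^sup>2"
  shows "normal_density 0 \<sigma> w \<le> normal_density 0 \<sigma> z"
proof -
  have "- w\<^sup>2 / (2 * \<sigma>\<^sup>2) \<le> - z\<^sup>2 / (2 * \<sigma>\<^sup>2)"
    using assms by (intro divide_right_mono) auto
  then show ?thesis unfolding normal_density_def
    by (intro mult_left_mono) auto
qed

lemma gauss_ball_emeasure:
  fixes Z :: "'j \<Rightarrow> 'w \<Rightarrow> real" and \<sigma> :: "'j \<Rightarrow> real" and M :: "'w measure"
  assumes P: "prob_space M" and J: "finite J" "J \<noteq> {}"
    and indep: "prob_space.indep_vars M (\<lambda>_. borel) Z J"
    and dist: "\<And>j. j \<in> J \<Longrightarrow> distributed M lborel (Z j) (normal_density 0 (\<sigma> j))"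
    and sig: "\<And>j. \<sigma> j > 0"
    and r: "r > 0"
  shows "emeasure M {\<omega>\<in>space M. (\<Sum>j\<in>J. (Z j \<omega>)\<^sup>2) \<le> r\<^sup>2} =
     (\<integral>\<^sup>+x. (\<Prod>j\<in>J. ennreal (normal_density 0 (\<sigma> j) (x j))) *
        indicator ({f. sqrt (\<Sum>i\<in>J. (f i)\<^sup>2) \<le> r} \<inter> space (Pi\<^sub>M J (\<lambda>_. lborel))) x \<partial>PiM J (\<lambda>_. lborel))"
proof -
  interpret prob_space M by (rule P)
  define \<Lambda> where "\<Lambda> = PiM J (\<lambda>_. lborel :: real measure)"
  define B where "B = {f. sqrt (\<Sum>i\<in>J. (f i)\<^sup>2) \<le> r} \<inter> space \<Lambda>"
  define X where "X = (\<lambda>\<omega>. \<lambda>j\<in>J. Z j \<omega>)"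
  have rv: "\<And>j. j \<in> J \<Longrightarrow> random_variable borel (Z j)"
    using indep unfolding indep_vars_def by auto
  have Xm: "X \<in> measurable M (PiM J (\<lambda>_. borel))"
    unfolding X_def using rv by (intro measurable_restrict) auto
  have setsL: "sets \<Lambda> = sets (PiM J (\<lambda>_. borel :: real measure))"
    unfolding \<Lambda>_def by (rule sets_PiM_cong) auto
  have Bs: "B \<in> sets \<Lambda>" unfolding B_def \<Lambda>_def by measurable
  have Bs': "B \<in> sets (PiM J (\<lambda>_. borel))" using Bs setsL by simp
  have E: "{\<omega>\<in>space M. (\<Sum>j\<in>J. (Z j \<omega>)\<^sup>2) \<le> r\<^sup>2} = X -` B \<inter> space M"
  proof -
    have "X \<omega> \<in> space \<Lambda>" for \<omega>
      unfolding X_def \<Lambda>_def by (simp add: space_PiM)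
    moreover have "sqrt (\<Sum>i\<in>J. (X \<omega> i)\<^sup>2) \<le> r \<longleftrightarrow> (\<Sum>j\<in>J. (Z j \<omega>)\<^sup>2) \<le> r\<^sup>2" for \<omega>
    proof -
      have "(\<Sum>i\<in>J. (X \<omega> i)\<^sup>2) = (\<Sum>j\<in>J. (Z j \<omega>)\<^sup>2)"
        unfolding X_def by (intro sum.cong) auto
      then show ?thesis using r
        by (simp add: real_sqrt_le_iff' sum_nonneg)
    qed
    ultimately show ?thesis unfolding B_def by auto
  qed
  have D: "distr M borel (Z j) = density lborel (\<lambda>x. ennreal (normal_density 0 (\<sigma> j) x))" if "j \<in> J" for j
  proof -
    have "distr M borel (Z j) = distr M lborel (Z j)" by (rule distr_cong) auto
    then show ?thesis using dist[OF that] unfolding distributed_def by simp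
  qed
  have "distr M (PiM J (\<lambda>_. borel)) X = PiM J (\<lambda>j. distr M borel (Z j))"
    unfolding X_def using indep_vars_iff_distr_eq_PiM'[OF J(2), where M'="\<lambda>_. borel" and X=Z] rv indep by simp
  also have "\<dots> = PiM J (\<lambda>j. density lborel (\<lambda>x. ennreal (normal_density 0 (\<sigma> j) x)))"
    using D by (intro PiM_cong) auto
  also have "\<dots> = density \<Lambda> (\<lambda>x. \<Prod>j\<in>J. ennreal (normal_density 0 (\<sigma> j) (x j)))"
    unfolding \<Lambda>_def
    by (rule PiM_density_prod[OF J(1)])
       (auto intro!: prob_space_imp_sigma_finite prob_space_normal_density sig)
  finally have Dist: "distr M (PiM J (\<lambda>_. borel)) X = density \<Lambda> (\<lambda>x. \<Prod>j\<in>J. ennreal (normal_density 0 (\<sigma> j) (x j)))" .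
  have "emeasure M {\<omega>\<in>space M. (\<Sum>j\<in>J. (Z j \<omega>)\<^sup>2) \<le> r\<^sup>2} = emeasure (distr M (PiM J (\<lambda>_. borel)) X) B"
    unfolding E using Xm Bs' by (simp add: emeasure_distr)
  also have "\<dots> = (\<integral>\<^sup>+x. (\<Prod>j\<in>J. ennreal (normal_density 0 (\<sigma> j) (x j))) * indicator B x \<partial>\<Lambda>)"
    unfolding Dist using Bs by (subst emeasure_density) (auto simp: \<Lambda>_def)
  finally show ?thesis unfolding B_def \<Lambda>_def .
qed


lemma gauss_ball_bounds:
  fixes Z :: "'j \<Rightarrow> 'w \<Rightarrow> real" and \<sigma> :: "'j \<Rightarrow> real" and M :: "'w measure"
  assumes P: "prob_space M" and J: "finite J" "J \<noteq> {}"
    and indep: "prob_space.indep_vars M (\<lambda>_. borel) Z J"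
    and dist: "\<And>j. j \<in> J \<Longrightarrow> distributed M lborel (Z j) (normal_density 0 (\<sigma> j))"
    and sig: "\<And>j. \<sigma> j > 0"
    and r: "r > 0"
  shows "(\<Prod>j\<in>J. normal_density 0 (\<sigma> j) r) * (unit_ball_vol (card J) * r ^ card J)
           \<le> measure M {\<omega>\<in>space M. (\<Sum>j\<in>J. (Z j \<omega>)\<^sup>2) \<le> r\<^sup>2}"
    and "measure M {\<omega>\<in>space M. (\<Sum>j\<in>J. (Z j \<omega>)\<^sup>2) \<le> r\<^sup>2}
           \<le> (\<Prod>j\<in>J. normal_density 0 (\<sigma> j) 0) * (unit_ball_vol (card J) * r ^ card J)"
proof -
  interpret prob_space M by (rule P)
  define \<Lambda> where "\<Lambda> = PiM J (\<lambda>_. lborel :: real measure)"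
  define B where "B = {f. sqrt (\<Sum>i\<in>J. (f i)\<^sup>2) \<le> r} \<inter> space \<Lambda>"
  define E where "E = {\<omega>\<in>space M. (\<Sum>j\<in>J. (Z j \<omega>)\<^sup>2) \<le> r\<^sup>2}"
  define V where "V = unit_ball_vol (card J) * r ^ card J"
  define lo where "lo = (\<Prod>j\<in>J. normal_density 0 (\<sigma> j) r)"
  define hi where "hi = (\<Prod>j\<in>J. normal_density 0 (\<sigma> j) 0)"
  have Bs: "B \<in> sets \<Lambda>" unfolding B_def \<Lambda>_def by measurable
  have EI: "emeasure M E = (\<integral>\<^sup>+x. ennreal (\<Prod>j\<in>J. normal_density 0 (\<sigma> j) (x j)) * indicator B x \<partial>\<Lambda>)"
    unfolding E_def B_def \<Lambda>_def
    by (subst gauss_ball_emeasure[OF P J indep dist sig r]) (auto simp: prod_ennreal)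
  have vol: "emeasure \<Lambda> B = ennreal V"
    unfolding \<Lambda>_def B_def V_def using emeasure_cball_aux[OF J(1) r] by simp
  have V0: "V \<ge> 0" unfolding V_def using r by simp
  have bnd: "lo \<le> (\<Prod>j\<in>J. normal_density 0 (\<sigma> j) (x j)) \<and> (\<Prod>j\<in>J. normal_density 0 (\<sigma> j) (x j)) \<le> hi"
    if "x \<in> B" for x
  proof -
    have "\<forall>i\<in>J. (x i)\<^sup>2 \<le> r\<^sup>2"
    proof
      fix i assume i: "i \<in> J"
      have "(x i)\<^sup>2 \<le> (\<Sum>i\<in>J. (x i)\<^sup>2)"
        using i J by (intro member_le_sum) auto
      also have "\<dots> \<le> r\<^sup>2" using that r unfolding B_def
        by (simp add: real_sqrt_le_iff' sum_nonneg)
      finally show "(x i)\<^sup>2 \<le> r\<^sup>2" .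
    qed
    then show ?thesis unfolding lo_def hi_def
      by (auto intro!: prod_mono normal_density_0_mono sig)
  qed
  have "emeasure M E \<le> (\<integral>\<^sup>+x. ennreal hi * indicator B x \<partial>\<Lambda>)"
    unfolding EI by (intro nn_integral_mono) (auto simp: indicator_def bnd intro!: ennreal_leI)
  also have "\<dots> = ennreal hi * ennreal V" using vol nn_integral_cmult_indicator[OF Bs] by simp
  also have "\<dots> = ennreal (hi * V)" using V0 by (simp add: ennreal_mult hi_def prod_nonneg)
  finally have "enn2real (emeasure M E) \<le> enn2real (ennreal (hi * V))"
    by (intro enn2real_mono) auto
  then show "measure M E \<le> hi * V"
    unfolding measure_def using V0 by (simp add: hi_def prod_nonneg)
  have lo0: "lo \<ge> 0" unfolding lo_def by (simp add: prod_nonneg)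
  have "ennreal (lo * V) = ennreal lo * ennreal V" using V0 lo0 by (simp add: ennreal_mult)
  also have "\<dots> = (\<integral>\<^sup>+x. ennreal lo * indicator B x \<partial>\<Lambda>)" using vol nn_integral_cmult_indicator[OF Bs] by simp
  also have "\<dots> \<le> emeasure M E"
    unfolding EI by (intro nn_integral_mono) (auto simp: indicator_def bnd intro!: ennreal_leI)
  finally have "ennreal (lo * V) \<le> emeasure M E" .
  then show "lo * V \<le> measure M E"
    unfolding measure_def using emeasure_finite[of E]
    by (metis emeasure_eq_ennreal_measure enn2real_ennreal ennreal_le_iff measure_nonneg)
qed


lemma pow_one_minus_limit:
  fixes q :: "nat \<Rightarrow> real"
  assumes nonneg: "eventually (\<lambda>n. 0 \<le> q n) sequentially"
    and lim: "(\<lambda>n. real n * q n) \<longlonglongrightarrow> L"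
  shows "(\<lambda>n. (1 - q n) ^ n) \<longlonglongrightarrow> exp (- L)"
proof -
  have q0: "q \<longlonglongrightarrow> 0"
  proof -
    have "(\<lambda>n. real n * q n * (1 / real n)) \<longlonglongrightarrow> L * 0"
      by (intro tendsto_mult lim lim_inverse_n')
    moreover have "eventually (\<lambda>n. real n * q n * (1 / real n) = q n) sequentially"
      using eventually_ge_at_top[of 1] by eventually_elim auto
    ultimately show ?thesis by (auto dest: Lim_transform_eventually)
  qed
  have small: "eventually (\<lambda>n. q n < 1/2) sequentially"
    using q0 by (rule order_tendstoD) simp
  have lo: "(\<lambda>n. - (real n * q n) - 2 * (real n * q n) * q n) \<longlonglongrightarrow> - L - 2 * L * 0"
    by (intro tendsto_intros lim q0)
  have hi: "(\<lambda>n. - (real n * q n)) \<longlonglongrightarrow> - L"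
    by (intro tendsto_intros lim)
  have "(\<lambda>n. real n * ln (1 - q n)) \<longlonglongrightarrow> - L"
  proof (rule tendsto_sandwich[OF _ _ lo[simplified] hi])
    show "eventually (\<lambda>n. - (real n * q n) - 2 * (real n * q n) * q n \<le> real n * ln (1 - q n)) sequentially"
      using nonneg small
    proof eventually_elim
      case (elim n)
      have "- q n - 2 * (q n)\<^sup>2 \<le> ln (1 - q n)"
        using elim by (intro ln_one_minus_pos_lower_bound) auto
      then have "real n * (- q n - 2 * (q n)\<^sup>2) \<le> real n * ln (1 - q n)"
        by (intro mult_left_mono) auto
      then show ?case by (simp add: algebra_simps power2_eq_square)
    qed
    show "eventually (\<lambda>n. real n * ln (1 - q n) \<le> - (real n * q n)) sequentially"
      using nonneg small
    proof eventually_elim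
      case (elim n)
      have "ln (1 - q n) \<le> - q n"
        using elim ln_le_minus_one[of "1 - q n"] by auto
      then show ?case by (metis mult_left_mono mult_minus_right of_nat_0_le_iff)
    qed
  qed
  then have "(\<lambda>n. exp (real n * ln (1 - q n))) \<longlonglongrightarrow> exp (- L)"
    by (rule tendsto_exp)
  moreover have "eventually (\<lambda>n. exp (real n * ln (1 - q n)) = (1 - q n) ^ n) sequentially"
    using small
  proof eventually_elim
    case (elim n)
    then have "1 - q n > 0" by simp
    then show ?case by (simp add: exp_of_nat_mult)
  qed
  ultimately show ?thesis by (rule Lim_transform_eventually)
qed


lemma gamma_k_pos: "k \<ge> 1 \<Longrightarrow> gamma_k k > 0"
proof -
  assume k: "k \<ge> 1"
  then have g: "Gamma (real k / 2) > 0" by (intro Gamma_real_pos) simp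
  have kr: "real k > 0" using k by simp
  have "2 / (real k * Gamma (real k / 2)) > 0"
    by (rule divide_pos_pos[OF _ mult_pos_pos[OF kr g]]) simp
  then have "(2 / (real k * Gamma (real k / 2))) powr (2 / real k) > 0"
    using g kr by (metis less_irrefl powr_gt_zero)
  then show ?thesis unfolding gamma_k_def by simp
qed

lemma const_identity:
  fixes y P :: real and k :: nat
  assumes k: "k \<ge> 1" and P: "P > 0" and y: "y > 0"
  shows "1 / ((2*pi) powr (real k / 2) * sqrt P) * unit_ball_vol (real k)
           * ((y * P powr (1 / real k) / gamma_k k) powr (real k / 2)) = y powr (real k / 2)"
proof -
  define n where "n = real k"
  have n: "n > 0" using k unfolding n_def by simp
  define G where "G = Gamma (n/2)"
  have G: "G > 0" unfolding G_def using n by (simp add: Gamma_real_pos)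
  have G1: "Gamma (n/2 + 1) = n/2 * G" unfolding G_def using Gamma_plus1[of "n/2"] n nonpos_Ints_nonpos[of "n/2"] by force
  have g: "gamma_k k = 1/2 * (2 / (n * G)) powr (2 / n)" unfolding gamma_k_def n_def G_def by simp
  have gp: "(gamma_k k) powr (n/2) = (1/2) powr (n/2) * (2 / (n * G))"
  proof -
    have "(gamma_k k) powr (n/2) = (1/2) powr (n/2) * ((2 / (n * G)) powr (2 / n)) powr (n/2)"
      unfolding g using n G powr_mult[of "1/2" "(2 / (n * G)) powr (2 / n)" "n/2"] by simp
    also have "((2 / (n * G)) powr (2 / n)) powr (n/2) = 2 / (n * G)"
      using n G by (simp add: powr_powr)
    finally show ?thesis .
  qed
  have Tp: "(y * P powr (1 / n) / gamma_k k) powr (n/2) = y powr (n/2) * sqrt P / (gamma_k k) powr (n/2)"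
  proof -
    have "(y * P powr (1 / n) / gamma_k k) powr (n/2) = y powr (n/2) * (P powr (1/n)) powr (n/2) / (gamma_k k) powr (n/2)"
      using y P k gamma_k_pos[OF k] by (simp add: powr_mult powr_divide)
    also have "(P powr (1/n)) powr (n/2) = sqrt P"
      using n P by (simp add: powr_powr powr_half_sqrt)
    finally show ?thesis .
  qed
  have pi2: "(2*pi) powr (n/2) = 2 powr (n/2) * pi powr (n/2)" by (simp add: powr_mult)
  have half: "(1/2::real) powr (n/2) = 1 / 2 powr (n/2)" by (simp add: powr_divide)
  have "1 / ((2*pi) powr (n / 2) * sqrt P) * unit_ball_vol n * ((y * P powr (1 / n) / gamma_k k) powr (n / 2))
      = y powr (n/2)"
    unfolding Tp gp unit_ball_vol_def G1 pi2 half using n G P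
    by (simp add: field_simps)
  then show ?thesis unfolding n_def .
qed


lemma quadform_diagA:
  assumes "k \<le> N"
  shows "quadform N (diagA k a) y = (\<Sum>j<k. a j * (y j)\<^sup>2)"
proof -
  have inner: "(\<Sum>j<N. diagA k a i j * y j) = (if i < k then a i * y i else 0)" if "i < N" for i
  proof -
    have "(\<Sum>j<N. diagA k a i j * y j) = (\<Sum>j<N. if j = i then (if i < k then a i * y i else 0) else 0)"
      unfolding diagA_def by (intro sum.cong) auto
    also have "\<dots> = (if i < k then a i * y i else 0)" using that by simp
    finally show ?thesis .
  qed
  have "quadform N (diagA k a) y = (\<Sum>i<N. if i < k then a i * (y i)\<^sup>2 else 0)"
    unfolding quadform_def by (intro sum.cong) (auto simp: inner power2_eq_square)
  also have "\<dots> = (\<Sum>i\<in>{..<N} \<inter> {i. i < k}. a i * (y i)\<^sup>2)"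
    by (simp add: sum.inter_restrict)
  also have "{..<N} \<inter> {i. i < k} = {..<k}" using assms by auto
  finally show ?thesis .
qed

lemma Pair_singleton_image: "{i} \<times> A = Pair i ` A" by auto

lemma prod_singleton_times: "(\<Prod>p\<in>{i} \<times> A. f p) = (\<Prod>j\<in>A. f (i, j))"
  unfolding Pair_singleton_image by (subst prod.reindex) (auto simp: inj_on_def)

lemma sum_singleton_times: "(\<Sum>p\<in>{i} \<times> A. f p) = (\<Sum>j\<in>A. f (i, j))"
  unfolding Pair_singleton_image by (subst sum.reindex) (auto simp: inj_on_def)


lemma core:
  fixes k N :: nat and a :: "nat \<Rightarrow> real" and M :: "'w measure"
    and Y :: "nat \<Rightarrow> 'w \<Rightarrow> nat \<Rightarrow> real"
  assumes k: "k \<ge> 1" and a_neg: "\<And>j. j < k \<Longrightarrow> a j < 0"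
    and P: "prob_space M"
    and indep: "prob_space.indep_vars M (\<lambda>_. borel) (\<lambda>(i, j) \<omega>. Y i \<omega> j) ({..<N} \<times> {..<N})"
    and gauss: "\<And>i j. i < N \<Longrightarrow> j < N \<Longrightarrow> distributed M lborel (\<lambda>\<omega>. Y i \<omega> j) std_normal_density"
    and Nk: "k < N" and c: "c > 0" and x: "x < 0"
    and r': "r' > 0" "r'\<^sup>2 < - x / c"
    and hi1: "(\<Prod>j<k. normal_density 0 (sqrt (- a j)) 0) * (unit_ball_vol k * sqrt (- x / c) ^ k) \<le> 1"
  shows "(1 - (\<Prod>j<k. normal_density 0 (sqrt (- a j)) 0) * (unit_ball_vol k * sqrt (- x / c) ^ k)) ^ N
           \<le> measure M {\<omega>\<in>space M. c * Max ((\<lambda>i. quadform N (diagA k a) (Y i \<omega>)) ` {..<N}) \<le> x}"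
    and "measure M {\<omega>\<in>space M. c * Max ((\<lambda>i. quadform N (diagA k a) (Y i \<omega>)) ` {..<N}) \<le> x}
           \<le> (1 - (\<Prod>j<k. normal_density 0 (sqrt (- a j)) r') * (unit_ball_vol k * r' ^ k)) ^ N"
proof -
  interpret prob_space M by (rule P)
  define t where "t = - x / c"
  have t: "t > 0" unfolding t_def using x c by (simp add: divide_neg_pos)
  define Y' where "Y' = (\<lambda>(i, j) \<omega>. Y i \<omega> j)"
  define \<sigma> where "\<sigma> = (\<lambda>p::nat\<times>nat. if snd p < k then sqrt (- a (snd p)) else 1)"
  define Z where "Z = (\<lambda>p \<omega>. \<sigma> p * Y' p \<omega>)"
  define K where "K = (\<lambda>i::nat. {i} \<times> {..<k})"
  define S where "S = (\<lambda>i \<omega>. \<Sum>p\<in>K i. (Z p \<omega>)\<^sup>2)"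
  define HH where "HH = (\<Prod>j<k. normal_density 0 (sqrt (- a j)) 0)"
  define lo where "lo = (\<Prod>j<k. normal_density 0 (sqrt (- a j)) r') * (unit_ball_vol k * r' ^ k)"
  define hi where "hi = HH * (unit_ball_vol k * sqrt t ^ k)"
  have sig: "\<sigma> p > 0" for p unfolding \<sigma>_def using a_neg by auto
  have ym: "(\<lambda>\<omega>. Y i \<omega> j) \<in> borel_measurable M" if "i < N" "j < N" for i j
    using distributed_measurable[OF gauss[OF that]] by simp
  have Sm: "S i \<in> borel_measurable M" if "i < N" for i
    unfolding S_def Z_def Y'_def K_def
    by (intro borel_measurable_sum borel_measurable_power borel_measurable_times borel_measurable_const)
       (use that Nk in \<open>auto intro!: ym\<close>)
  have S_eq: "S i \<omega> = (\<Sum>j<k. - a j * (Y i \<omega> j)\<^sup>2)" for i \<omega>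
    unfolding S_def K_def sum_singleton_times Z_def Y'_def \<sigma>_def
    by (intro sum.cong) (auto simp: power_mult_distrib less_imp_le[OF a_neg])
  have Q_eq: "quadform N (diagA k a) (Y i \<omega>) = - S i \<omega>" for i \<omega>
    unfolding quadform_diagA[OF less_imp_le[OF Nk]] S_eq by (simp add: sum_negf)
  have ev: "{\<omega>\<in>space M. c * Max ((\<lambda>i. quadform N (diagA k a) (Y i \<omega>)) ` {..<N}) \<le> x}
      = (\<Inter>i\<in>{..<N}. {\<omega>\<in>space M. t \<le> S i \<omega>})"
  proof -
    have "c * Max ((\<lambda>i. quadform N (diagA k a) (Y i \<omega>)) ` {..<N}) \<le> x \<longleftrightarrow> (\<forall>i<N. t \<le> S i \<omega>)" for \<omega>
    proof -
      have "c * Max ((\<lambda>i. quadform N (diagA k a) (Y i \<omega>)) ` {..<N}) \<le> x \<longleftrightarrow>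
            Max ((\<lambda>i. quadform N (diagA k a) (Y i \<omega>)) ` {..<N}) \<le> x / c"
        using c by (simp add: pos_le_divide_eq mult.commute)
      also have "\<dots> \<longleftrightarrow> (\<forall>i<N. - S i \<omega> \<le> x / c)"
        using Nk by (subst Max_le_iff) (auto simp: Q_eq)
      also have "\<dots> \<longleftrightarrow> (\<forall>i<N. t \<le> S i \<omega>)" unfolding t_def by auto
      finally show ?thesis .
    qed
    then show ?thesis using Nk by auto
  qed
  have indY': "indep_vars (\<lambda>_. borel) Y' ({..<N} \<times> {..<N})" using indep unfolding Y'_def .
  have ind_r: "indep_vars (\<lambda>i. PiM (K i) (\<lambda>_. borel)) (\<lambda>i \<omega>. restrict (\<lambda>p. Y' p \<omega>) (K i)) {..<N}"
    by (rule indep_vars_restrict[OF indY']) (use Nk in \<open>auto simp: K_def disjoint_family_on_def\<close>)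
  define A where "A = (\<lambda>i. {v\<in>space (PiM (K i) (\<lambda>_. borel :: real measure)). t \<le> (\<Sum>p\<in>K i. (\<sigma> p * v p)\<^sup>2)})"
  have As: "A i \<in> sets (PiM (K i) (\<lambda>_. borel))" for i
    unfolding A_def by measurable
  have pre: "(\<lambda>\<omega>. restrict (\<lambda>p. Y' p \<omega>) (K i)) -` A i \<inter> space M = {\<omega>\<in>space M. t \<le> S i \<omega>}" for i
  proof -
    have "(\<Sum>p\<in>K i. (\<sigma> p * restrict (\<lambda>p. Y' p \<omega>) (K i) p)\<^sup>2) = S i \<omega>" for \<omega>
      unfolding S_def Z_def by (intro sum.cong) auto
    then show ?thesis unfolding A_def by (auto simp: space_PiM)
  qed
  have "measure M (\<Inter>i\<in>{..<N}. {\<omega>\<in>space M. t \<le> S i \<omega>}) = (\<Prod>i<N. measure M {\<omega>\<in>space M. t \<le> S i \<omega>})"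
    using indep_varsD_finite[OF ind_r, of A] Nk As unfolding pre by auto
  also have "\<dots> = (\<Prod>i<N. 1 - measure M {\<omega>\<in>space M. S i \<omega> < t})"
  proof (intro prod.cong refl)
    fix i assume "i \<in> {..<N}"
    then have i: "i < N" by simp
    have "{\<omega>\<in>space M. S i \<omega> < t} \<in> events" using Sm[OF i] by measurable
    then have "measure M (space M - {\<omega>\<in>space M. S i \<omega> < t}) = 1 - measure M {\<omega>\<in>space M. S i \<omega> < t}"
      by (rule prob_compl)
    moreover have "space M - {\<omega>\<in>space M. S i \<omega> < t} = {\<omega>\<in>space M. t \<le> S i \<omega>}" by auto
    ultimately show "measure M {\<omega>\<in>space M. t \<le> S i \<omega>} = 1 - measure M {\<omega>\<in>space M. S i \<omega> < t}" by simp
  qed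
  finally have main: "measure M {\<omega>\<in>space M. c * Max ((\<lambda>i. quadform N (diagA k a) (Y i \<omega>)) ` {..<N}) \<le> x}
     = (\<Prod>i<N. 1 - measure M {\<omega>\<in>space M. S i \<omega> < t})" unfolding ev .
  have bnds: "lo \<le> measure M {\<omega>\<in>space M. S i \<omega> < t} \<and> measure M {\<omega>\<in>space M. S i \<omega> < t} \<le> hi"
    if i: "i < N" for i
  proof -
    have KN: "K i \<subseteq> {..<N} \<times> {..<N}" unfolding K_def using i Nk by auto
    have indZ: "indep_vars (\<lambda>_. borel) Z (K i)"
      unfolding Z_def
      by (rule indep_vars_compose2[OF indep_vars_subset[OF indY' KN]]) simp
    have distZ: "distributed M lborel (Z p) (normal_density 0 (\<sigma> p))" if p: "p \<in> K i" for p
    proof -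
      obtain j where pj: "p = (i, j)" "j < k" using p unfolding K_def by auto
      have "distributed M lborel (\<lambda>\<omega>. 0 + \<sigma> p * Y i \<omega> j) (normal_density (0 + \<sigma> p * 0) (\<bar>\<sigma> p\<bar> * 1))"
        using sig[of p] by (intro normal_density_affine gauss) (use i pj Nk in auto)
      then show ?thesis using sig[of p] unfolding Z_def Y'_def pj by simp
    qed
    have KJ: "finite (K i)" "K i \<noteq> {}" unfolding K_def using k by (auto simp: lessThan_empty_iff)
    have cardK: "card (K i) = k" unfolding K_def by (simp add: card_cartesian_product)
    have prodK: "(\<Prod>p\<in>K i. normal_density 0 (\<sigma> p) r) = (\<Prod>j<k. normal_density 0 (sqrt (- a j)) r)" for r
      unfolding K_def prod_singleton_times \<sigma>_def by simp
    note B = gauss_ball_bounds[OF P KJ indZ distZ sig]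
    have Sd: "(\<Sum>j\<in>K i. (Z j \<omega>)\<^sup>2) = S i \<omega>" for \<omega> unfolding S_def ..
    have up: "measure M {\<omega>\<in>space M. S i \<omega> \<le> (sqrt t)\<^sup>2} \<le> hi"
      using B(2)[of "sqrt t"] t unfolding Sd cardK prodK hi_def HH_def by simp
    have lw: "lo \<le> measure M {\<omega>\<in>space M. S i \<omega> \<le> r'\<^sup>2}"
      using B(1)[of r'] r' unfolding Sd cardK prodK lo_def by simp
    have m1: "{\<omega>\<in>space M. S i \<omega> \<le> (sqrt t)\<^sup>2} \<in> events" using Sm[OF i] by measurable
    have m2: "{\<omega>\<in>space M. S i \<omega> < t} \<in> events" using Sm[OF i] by measurable
    have "measure M {\<omega>\<in>space M. S i \<omega> < t} \<le> measure M {\<omega>\<in>space M. S i \<omega> \<le> (sqrt t)\<^sup>2}"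
      using t by (intro finite_measure_mono[OF _ m1]) auto
    moreover have "measure M {\<omega>\<in>space M. S i \<omega> \<le> r'\<^sup>2} \<le> measure M {\<omega>\<in>space M. S i \<omega> < t}"
      using r' t_def by (intro finite_measure_mono[OF _ m2]) auto
    ultimately show ?thesis using up lw by linarith
  qed
  have hi1': "hi \<le> 1" using hi1 unfolding hi_def HH_def t_def .
  have "(1 - hi) ^ N = (\<Prod>i<N. 1 - hi)" by simp
  also have "\<dots> \<le> (\<Prod>i<N. 1 - measure M {\<omega>\<in>space M. S i \<omega> < t})"
    using bnds hi1' by (intro prod_mono) force
  finally show "(1 - HH * (unit_ball_vol k * sqrt (- x / c) ^ k)) ^ N
           \<le> measure M {\<omega>\<in>space M. c * Max ((\<lambda>i. quadform N (diagA k a) (Y i \<omega>)) ` {..<N}) \<le> x}"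
    unfolding main hi_def t_def .
  have "(\<Prod>i<N. 1 - measure M {\<omega>\<in>space M. S i \<omega> < t}) \<le> (\<Prod>i<N. 1 - lo)"
    using bnds by (intro prod_mono) (auto simp: prob_le_1 intro: prob_le_1)
  also have "\<dots> = (1 - lo) ^ N" by simp
  finally show "measure M {\<omega>\<in>space M. c * Max ((\<lambda>i. quadform N (diagA k a) (Y i \<omega>)) ` {..<N}) \<le> x}
           \<le> (1 - (\<Prod>j<k. normal_density 0 (sqrt (- a j)) r') * (unit_ball_vol k * r' ^ k)) ^ N"
    unfolding main lo_def .
qed


lemma HH_eq:
  fixes b :: "nat \<Rightarrow> real"
  assumes "\<And>j. j < k \<Longrightarrow> b j > 0"
  shows "(\<Prod>j<k. normal_density 0 (sqrt (b j)) 0) = 1 / ((2*pi) powr (real k / 2) * sqrt (\<Prod>j<k. b j))"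
  using assms
proof (induction k)
  case 0
  then show ?case by simp
next
  case (Suc k)
  have IH: "(\<Prod>j<k. normal_density 0 (sqrt (b j)) 0) = 1 / ((2*pi) powr (real k / 2) * sqrt (\<Prod>j<k. b j))"
    using Suc by auto
  have bk: "b k > 0" using Suc by auto
  have nd: "normal_density 0 (sqrt (b k)) 0 = 1 / ((2*pi) powr (1/2) * sqrt (b k))"
    unfolding normal_density_def using bk by (simp add: powr_half_sqrt real_sqrt_mult)
  have pw: "(2*pi) powr (real (Suc k) / 2) = (2*pi) powr (real k / 2) * (2*pi) powr (1/2)"
    by (simp add: powr_add[symmetric] add_divide_distrib add.commute)
  show ?case unfolding prod.lessThan_Suc IH nd pw by (simp add: real_sqrt_mult)
qed

lemma sqrt_pow_powr: "y > 0 \<Longrightarrow> sqrt y ^ k = y powr (real k / 2)"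
proof -
  assume y: "y > 0"
  have "sqrt y ^ k = (y powr (1/2)) powr real k" using y by (simp add: powr_half_sqrt powr_realpow)
  also have "\<dots> = y powr (real k / 2)" by (simp add: powr_powr)
  finally show ?thesis .
qed

lemma tN_pow:
  assumes T: "T > 0" and N: "N > 0" and k: "k \<ge> 1"
  shows "(T / real N powr (2 / real k)) powr (real k / 2) = T powr (real k / 2) / real N"
proof -
  have "(T / real N powr (2 / real k)) powr (real k / 2) = T powr (real k / 2) / (real N powr (2 / real k)) powr (real k / 2)"
    using T N by (simp add: powr_divide)
  also have "(real N powr (2 / real k)) powr (real k / 2) = real N"
    using N k by (simp add: powr_powr)
  finally show ?thesis .
qed


lemma core0:
  fixes k N :: nat and a :: "nat \<Rightarrow> real" and M :: "'w measure"
    and Y :: "nat \<Rightarrow> 'w \<Rightarrow> nat \<Rightarrow> real"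
  assumes a_neg: "\<And>j. j < k \<Longrightarrow> a j < 0"
    and P: "prob_space M" and Nk: "k < N" and c: "c > 0" and x: "x \<ge> 0"
  shows "measure M {\<omega>\<in>space M. c * Max ((\<lambda>i. quadform N (diagA k a) (Y i \<omega>)) ` {..<N}) \<le> x} = 1"
proof -
  interpret prob_space M by (rule P)
  have "c * Max ((\<lambda>i. quadform N (diagA k a) (Y i \<omega>)) ` {..<N}) \<le> x" for \<omega>
  proof -
    have "quadform N (diagA k a) (Y i \<omega>) \<le> 0" for i
      unfolding quadform_diagA[OF less_imp_le[OF Nk]]
      by (intro sum_nonpos) (auto intro!: mult_nonpos_nonneg less_imp_le[OF a_neg])
    then have "Max ((\<lambda>i. quadform N (diagA k a) (Y i \<omega>)) ` {..<N}) \<le> 0"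
      using Nk by (subst Max_le_iff) auto
    then show ?thesis using c x by (meson dual_order.trans mult_nonneg_nonpos less_imp_le)
  qed
  then show ?thesis by (simp add: prob_space)
qed

lemma cdf_distr_eq:
  assumes "f \<in> borel_measurable M"
  shows "cdf (distr M borel f) x = measure M {\<omega>\<in>space M. f \<omega> \<le> x}"
  unfolding cdf_def using assms by (subst measure_distr) (auto intro!: arg_cong[where f="measure M"])


theorem lemma4p3:
  fixes k :: nat and a :: "nat \<Rightarrow> real"
    and M :: "nat \<Rightarrow> 'w measure"
    and Y :: "nat \<Rightarrow> nat \<Rightarrow> 'w \<Rightarrow> nat \<Rightarrow> real"
    and Psi :: "real measure"
  assumes k_pos: "k \<ge> 1"
    and a_neg: "\<And>j. j < k \<Longrightarrow> a j < 0"
    and prob: "\<And>N. prob_space (M N)"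
    and indep: "\<And>N. prob_space.indep_vars (M N) (\<lambda>_. borel)
                   (\<lambda>(i, j) \<omega>. Y N i \<omega> j) ({..<N} \<times> {..<N})"
    and gauss: "\<And>N i j. i < N \<Longrightarrow> j < N \<Longrightarrow>
                   distributed (M N) lborel (\<lambda>\<omega>. Y N i \<omega> j) std_normal_density"
    and Psi_distr: "real_distribution Psi"
    and Psi_cdf: "\<And>x. cdf Psi x = Psi_cdf (real k / 2) x"
  shows "weak_conv_m
           (\<lambda>N. distr (M N) borel
              (\<lambda>\<omega>. gamma_k k * real N powr (2 / real k)
                     / (\<Prod>j<k. \<bar>a j\<bar>) powr (1 / real k)
                     * Max ((\<lambda>i. quadform N (diagA k a) (Y N i \<omega>)) ` {..<N})))
           Psi"
proof -
  define P0 where "P0 = (\<Prod>j<k. \<bar>a j\<bar>)"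
  have P0: "P0 > 0" unfolding P0_def using a_neg by (intro prod_pos) force
  have P0': "P0 = (\<Prod>j<k. - a j)" unfolding P0_def using a_neg by (intro prod.cong) force+
  have g: "gamma_k k > 0" using gamma_k_pos[OF k_pos] .
  define c where "c N = gamma_k k * real N powr (2 / real k) / P0 powr (1 / real k)" for N
  have cpos: "c N > 0" if "N > 0" for N unfolding c_def using that g P0 by simp
  define f where "f N \<omega> = c N * Max ((\<lambda>i. quadform N (diagA k a) (Y N i \<omega>)) ` {..<N})" for N \<omega>
  have fm: "f N \<in> borel_measurable (M N)" if "k < N" for N
  proof -
    have ym: "(\<lambda>\<omega>. Y N i \<omega> j) \<in> borel_measurable (M N)" if "i < N" "j < N" for i j
      using distributed_measurable[OF gauss[OF that]] by simp
    have "(\<lambda>\<omega>. quadform N (diagA k a) (Y N i \<omega>)) \<in> borel_measurable (M N)" if "i < N" for i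
      unfolding quadform_diagA[OF less_imp_le[OF \<open>k < N\<close>]]
      by (intro borel_measurable_sum borel_measurable_times borel_measurable_power borel_measurable_const)
         (use that \<open>k < N\<close> in \<open>auto intro!: ym\<close>)
    then show ?thesis unfolding f_def
      by (intro borel_measurable_times borel_measurable_const borel_measurable_Max) auto
  qed
  have Fm: "cdf (distr (M N) borel (f N)) x =
      measure (M N) {\<omega>\<in>space (M N). c N * Max ((\<lambda>i. quadform N (diagA k a) (Y N i \<omega>)) ` {..<N}) \<le> x}"
    if "k < N" for N x
    using cdf_distr_eq[OF fm[OF that]] unfolding f_def .
  have main: "(\<lambda>N. cdf (distr (M N) borel (f N)) x) \<longlonglongrightarrow> Psi_cdf (real k / 2) x" for x
  proof (cases "x \<ge> 0")
    case True
    have "eventually (\<lambda>N. cdf (distr (M N) borel (f N)) x = 1) sequentially"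
      using eventually_gt_at_top[of k]
    proof eventually_elim
      case (elim N)
      then show ?case unfolding Fm[OF elim]
        using core0[OF a_neg prob elim cpos True] elim by simp
    qed
    then have "(\<lambda>N. cdf (distr (M N) borel (f N)) x) \<longlonglongrightarrow> 1" by (rule tendsto_eventually)
    then show ?thesis using True unfolding Psi_cdf_def by simp
  next
    case False
    then have x: "x < 0" by simp
    define T where "T = - x * P0 powr (1 / real k) / gamma_k k"
    have T: "T > 0" unfolding T_def using x P0 g by (intro divide_pos_pos mult_pos_pos) auto
    define L where "L = (- x) powr (real k / 2)"
    define HH where "HH = (\<Prod>j<k. normal_density 0 (sqrt (- a j)) 0)"
    define V where "V = unit_ball_vol (real k)"
    have V: "V \<ge> 0" unfolding V_def by simp
    define phiR where "phiR r = (\<Prod>j<k. normal_density 0 (sqrt (- a j)) r)" for r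
    have HHv: "HH = 1 / ((2*pi) powr (real k / 2) * sqrt P0)"
      unfolding HH_def P0' using a_neg by (intro HH_eq) simp
    have LL: "HH * V * T powr (real k / 2) = L"
      unfolding HHv V_def T_def L_def using const_identity[OF k_pos P0, of "- x"] x by simp
    have tN: "- x / c N = T / real N powr (2 / real k)" if "N > 0" for N
      unfolding c_def T_def using that g P0 by (simp add: field_simps)
    define hiN where "hiN N = HH * (V * sqrt (- x / c N) ^ k)" for N
    define rN where "rN N = sqrt ((- x / c N) * (real N / real (Suc N)))" for N
    define loN where "loN N = phiR (rN N) * (V * rN N ^ k)" for N
    have hiN_eq: "real N * hiN N = L" if "N > 0" for N
    proof -
      have "sqrt (- x / c N) ^ k = T powr (real k / 2) / real N"
        unfolding tN[OF that] using T that k_pos by (simp add: sqrt_pow_powr tN_pow)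
      then show ?thesis unfolding hiN_def using that LL[symmetric] by simp
    qed
    have loN_eq: "real N * loN N = phiR (rN N) * V * T powr (real k / 2) * (real N / real (Suc N)) powr (real k / 2)"
      if "N > 0" for N
    proof -
      have "rN N ^ k = ((T / real N powr (2 / real k)) * (real N / real (Suc N))) powr (real k / 2)"
        unfolding rN_def tN[OF that] using T that by (intro sqrt_pow_powr) simp
      also have "\<dots> = (T / real N powr (2 / real k)) powr (real k / 2) * (real N / real (Suc N)) powr (real k / 2)"
        using T that by (intro powr_mult)
      also have "\<dots> = T powr (real k / 2) / real N * (real N / real (Suc N)) powr (real k / 2)"
        using T that k_pos by (simp add: tN_pow)
      finally show ?thesis unfolding loN_def using that by simp
    qed
    have rN_pos: "rN N > 0" and rN_lt: "(rN N)\<^sup>2 < - x / c N" if "N > 0" for N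
    proof -
      have t: "- x / c N > 0" using x cpos[OF that] by (simp add: divide_neg_pos)
      show "rN N > 0" unfolding rN_def using that by (intro real_sqrt_gt_zero mult_pos_pos t divide_pos_pos) auto
      have "(rN N)\<^sup>2 = (- x / c N) * (real N / real (Suc N))"
      proof -
        have nn: "0 \<le> (- x / c N) * (real N / real (Suc N))"
          apply (rule mult_nonneg_nonneg) using t apply linarith by simp
        show ?thesis unfolding rN_def by (rule real_sqrt_pow2[OF nn])
      qed
      also have "\<dots> < (- x / c N) * 1" using t by (intro mult_strict_left_mono) auto
      finally show "(rN N)\<^sup>2 < - x / c N" by simp
    qed
    have t0: "(\<lambda>N. T / real N powr (2 / real k)) \<longlonglongrightarrow> 0"
    proof -
      have "(\<lambda>N. real N powr (- (2 / real k))) \<longlonglongrightarrow> 0"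
        using k_pos by (intro tendsto_neg_powr filterlim_real_sequentially) simp
      then have "(\<lambda>N. T * real N powr (- (2 / real k))) \<longlonglongrightarrow> T * 0" by (intro tendsto_intros)
      then show ?thesis by (simp add: powr_minus_divide)
    qed
    have rN0: "rN \<longlonglongrightarrow> 0"
    proof -
      have "(\<lambda>N. sqrt ((T / real N powr (2 / real k)) * (real N / real (Suc N)))) \<longlonglongrightarrow> sqrt (0 * 1)"
        by (intro tendsto_intros t0 LIMSEQ_n_over_Suc_n)
      moreover have "eventually (\<lambda>N. sqrt ((T / real N powr (2 / real k)) * (real N / real (Suc N))) = rN N) sequentially"
        using eventually_gt_at_top[of 0] by eventually_elim (simp only: rN_def tN)
      ultimately show ?thesis by (simp add: Lim_transform_eventually)
    qed
    have phi0: "(\<lambda>N. phiR (rN N)) \<longlonglongrightarrow> HH"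
      unfolding phiR_def HH_def
    proof (intro tendsto_prod)
      fix j assume j: "j \<in> {..<k}"
      then have "a j < 0" using a_neg by simp
      then show "(\<lambda>N. normal_density 0 (sqrt (- a j)) (rN N)) \<longlonglongrightarrow> normal_density 0 (sqrt (- a j)) 0"
        unfolding normal_density_def using rN0 by (intro tendsto_intros) auto
    qed
    have lim_lo: "(\<lambda>N. real N * loN N) \<longlonglongrightarrow> L"
    proof -
      have "(\<lambda>N. phiR (rN N) * V * T powr (real k / 2) * (real N / real (Suc N)) powr (real k / 2))
            \<longlonglongrightarrow> HH * V * T powr (real k / 2) * 1 powr (real k / 2)"
        by (intro tendsto_intros phi0 LIMSEQ_n_over_Suc_n) auto
      then have "(\<lambda>N. phiR (rN N) * V * T powr (real k / 2) * (real N / real (Suc N)) powr (real k / 2)) \<longlonglongrightarrow> L"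
        using LL by simp
      moreover have "eventually (\<lambda>N. phiR (rN N) * V * T powr (real k / 2) * (real N / real (Suc N)) powr (real k / 2)
                 = real N * loN N) sequentially"
        using eventually_gt_at_top[of 0] by eventually_elim (simp add: loN_eq)
      ultimately show ?thesis by (rule Lim_transform_eventually)
    qed
    have lim_hi: "(\<lambda>N. real N * hiN N) \<longlonglongrightarrow> L"
    proof -
      have "eventually (\<lambda>N. L = real N * hiN N) sequentially"
        using eventually_gt_at_top[of 0] by eventually_elim (simp add: hiN_eq)
      then show ?thesis by (rule Lim_transform_eventually[OF tendsto_const])
    qed
    have HH0: "HH \<ge> 0" unfolding HH_def by (simp add: prod_nonneg)
    have hi_nn: "eventually (\<lambda>N. 0 \<le> hiN N) sequentially"
      using eventually_gt_at_top[of 0]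
    proof eventually_elim
      case (elim N)
      have "- x / c N > 0" using x cpos[OF elim] by (simp add: divide_neg_pos)
      then show ?case unfolding hiN_def using HH0 V by (intro mult_nonneg_nonneg zero_le_power) auto
    qed
    have lo_nn: "eventually (\<lambda>N. 0 \<le> loN N) sequentially"
      using eventually_gt_at_top[of 0]
    proof eventually_elim
      case (elim N)
      then show ?case unfolding loN_def phiR_def using V rN_pos[OF elim]
        by (intro mult_nonneg_nonneg prod_nonneg) auto
    qed
    have Lhi: "(\<lambda>N. (1 - hiN N) ^ N) \<longlonglongrightarrow> exp (- L)"
      by (rule pow_one_minus_limit[OF hi_nn lim_hi])
    have Llo: "(\<lambda>N. (1 - loN N) ^ N) \<longlonglongrightarrow> exp (- L)"
      by (rule pow_one_minus_limit[OF lo_nn lim_lo])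
    obtain n0 :: nat where n0: "L \<le> real n0" using real_arch_simple by blast
    have ev: "eventually (\<lambda>N. (1 - hiN N) ^ N \<le> cdf (distr (M N) borel (f N)) x
                \<and> cdf (distr (M N) borel (f N)) x \<le> (1 - loN N) ^ N) sequentially"
      using eventually_gt_at_top[of "max k n0"]
    proof eventually_elim
      case (elim N)
      then have Nk: "k < N" and N0: "N > 0" and Nn0: "real n0 < real N" by auto
      have hi1: "hiN N \<le> 1"
      proof -
        have "real N * hiN N \<le> real N * 1" using hiN_eq[OF N0] n0 Nn0 by simp
        then show ?thesis using N0 by simp
      qed
      have hi1': "(\<Prod>j<k. normal_density 0 (sqrt (- a j)) 0) * (unit_ball_vol (real k) * sqrt (- x / c N) ^ k) \<le> 1"
        using hi1 unfolding hiN_def HH_def V_def .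
      note C = core[where a=a and k=k and M="M N" and Y="Y N" and N=N and c="c N" and x=x and r'="rN N",
          OF k_pos a_neg prob[of N] indep[of N] gauss[where N=N] Nk cpos[OF N0] x rN_pos[OF N0] rN_lt[OF N0] hi1']
      show ?case unfolding Fm[OF Nk]
        using C unfolding hiN_def loN_def phiR_def HH_def V_def by auto
    qed
    have "(\<lambda>N. cdf (distr (M N) borel (f N)) x) \<longlonglongrightarrow> exp (- L)"
      by (rule tendsto_sandwich[OF _ _ Lhi Llo]) (use ev in \<open>auto elim: eventually_mono\<close>)
    then show ?thesis unfolding Psi_cdf_def L_def using x by simp
  qed
  show ?thesis
    unfolding weak_conv_m_def weak_conv_def
  proof (intro allI impI)
    fix x
    show "(\<lambda>N. cdf (distr (M N) borel (\<lambda>\<omega>. gamma_k k * real N powr (2 / real k)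
                     / (\<Prod>j<k. \<bar>a j\<bar>) powr (1 / real k)
                     * Max ((\<lambda>i. quadform N (diagA k a) (Y N i \<omega>)) ` {..<N}))) x) \<longlonglongrightarrow> cdf Psi x"
      using main[of x] unfolding Psi_cdf f_def c_def P0_def .
  qed
qed

end
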